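(* Let $\mathcal{G}=\langle S,A,T,s_0,F\rangle$ be a two-player turn-based deterministic reachability game and let $Y\subseteq \mathrm{Win}_2(\mathcal{G},F)\setminus F$. Let $\mathcal{G}_{\emptyset,Y}=\langle S,A,T_{\emptyset,Y},s_0,F\cup Y\rangle$ be the game in which $T_{\emptyset,Y}(s,a)=T(s,a)$ if $s\notin Y$ and $T_{\emptyset,Y}(s,a)=s$ if $s\in Y$, and whose goal set (for P2) is $F\cup Y$. Then for every state $s\in\mathrm{Win}_2(\mathcal{G},F)$, the rank of $s$ in $\mathcal{G}_{\emptyset,Y}$ (with respect to the target $F\cup Y$) is less than or equal to its rank in $\mathcal{G}$ (with respect to the target $F$).
   Context: A two-player turn-based deterministic reachability game is a tuple $\mathcal{G}=\langle S,A,T,s_0,F\rangle$ where $S$ is a finite set of states partitioned into P1 states $S_1$ and P2 states $S_2$; $A=A_1\cup A_2$ with $A_1$ the actions of P1 and $A_2$ the actions of P2; $T:(S_1\times A_1)\cup(S_2\times A_2)\to S$ is a deterministic (possibly partial) transition function, an action $a$ being enabled at $s$ if $T(s,a)$ is defined, and every state has at least one enabled action; $s_0\in S$ is an initial state; $F\subseteq S$ is a set of sink states (P2's goal). For a game with transition function $\tau$ and a target set $R\subseteq S$, define level sets $Z_0=R$ and $Z_{k+1}=Z_k\cup\{s\in S_1:\tau(s,a)\in Z_k\text{ for every }a\text{ enabled at }s\}\cup\{s\in S_2:\tau(s,a)\in Z_k\text{ for some enabled }a\}$. P2's winning region is $\bigcup_k Z_k$ (the set of states from which P2 can force a visit to $R$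 in finitely many steps); for $\mathcal{G}$ with target $F$ this is denoted $\mathrm{Win}_2(\mathcal{G},F)$. The rank of a state $s$ is $\min\{k:s\in Z_k\}$ (and $\infty$ if $s$ lies in no $Z_k$), i.e., the minimum number of steps within which P2 can guarantee a visit to the target regardless of P1's play. *)

theory Defs
  imports Main "HOL-Library.Extended_Nat"
begin

text \<open>States S (partitioned into S1, S2), actions A1, A2, partial transition
  function T (None = action not enabled), initial state s0, sink goal set F.\<close>

definition enabled :: "('s \<Rightarrow> 'a \<Rightarrow> 's option) \<Rightarrow> 's \<Rightarrow> 'a \<Rightarrow> bool" where
  "enabled T s a \<longleftrightarrow> T s a \<noteq> None"

definition game :: "'s set \<Rightarrow> 's set \<Rightarrow> 'a set \<Rightarrow> 'a set \<Rightarrow>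
    ('s \<Rightarrow> 'a \<Rightarrow> 's option) \<Rightarrow> 's \<Rightarrow> 's set \<Rightarrow> bool" where
  "game S1 S2 A1 A2 T s0 F \<longleftrightarrow>
     finite (S1 \<union> S2) \<and> S1 \<inter> S2 = {} \<and>
     s0 \<in> S1 \<union> S2 \<and> F \<subseteq> S1 \<union> S2 \<and>
     (\<forall>s a. enabled T s a \<longrightarrow> (s \<in> S1 \<and> a \<in> A1) \<or> (s \<in> S2 \<and> a \<in> A2)) \<and>
     (\<forall>s a. enabled T s a \<longrightarrow> the (T s a) \<in> S1 \<union> S2) \<and>
     (\<forall>s \<in> S1 \<union> S2. \<exists>a. enabled T s a) \<and>
     (\<forall>s \<in> F. \<forall>a. enabled T s a \<longrightarrow> T s a = Some s)"

fun Z :: "'s set \<Rightarrow> 's set \<Rightarrow> ('s \<Rightarrow> 'a \<Rightarrow> 's option) \<Rightarrow> 's set \<Rightarrow> nat \<Rightarrow> 's set" where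
  "Z S1 S2 T R 0 = R"
| "Z S1 S2 T R (Suc k) = Z S1 S2 T R k
     \<union> {s \<in> S1. \<forall>a. enabled T s a \<longrightarrow> the (T s a) \<in> Z S1 S2 T R k}
     \<union> {s \<in> S2. \<exists>a. enabled T s a \<and> the (T s a) \<in> Z S1 S2 T R k}"

definition Win2 :: "'s set \<Rightarrow> 's set \<Rightarrow> ('s \<Rightarrow> 'a \<Rightarrow> 's option) \<Rightarrow> 's set \<Rightarrow> 's set" where
  "Win2 S1 S2 T R = (\<Union>k. Z S1 S2 T R k)"

definition rank :: "'s set \<Rightarrow> 's set \<Rightarrow> ('s \<Rightarrow> 'a \<Rightarrow> 's option) \<Rightarrow> 's set \<Rightarrow> 's \<Rightarrow> enat" where
  "rank S1 S2 T R s = (if \<exists>k. s \<in> Z S1 S2 T R k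
      then enat (LEAST k. s \<in> Z S1 S2 T R k) else \<infinity>)"

definition T_Y :: "('s \<Rightarrow> 'a \<Rightarrow> 's option) \<Rightarrow> 's set \<Rightarrow> 's \<Rightarrow> 'a \<Rightarrow> 's option" where
  "T_Y T Y s a = (if s \<in> Y then map_option (\<lambda>_. s) (T s a) else T s a)"

end

theory Submission
  imports Defs
begin

lemma Z_mono_k: "Z S1 S2 T R k \<subseteq> Z S1 S2 T R (k + m)"
  by (induction m) auto

lemma R_sub_Z: "R \<subseteq> Z S1 S2 T R k"
  using Z_mono_k[of S1 S2 T R 0 k] by simp

lemma enabled_TY: "enabled (T_Y T Y) s a = enabled T s a"
  by (simp add: enabled_def T_Y_def)

lemma Z_sub: "Z S1 S2 T F k \<subseteq> Z S1 S2 (T_Y T Y) (F \<union> Y) k"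
proof (induction k)
  case 0
  then show ?case by auto
next
  case (Suc k)
  show ?case
  proof
    fix s assume s: "s \<in> Z S1 S2 T F (Suc k)"
    show "s \<in> Z S1 S2 (T_Y T Y) (F \<union> Y) (Suc k)"
    proof (cases "s \<in> Y")
      case True
      then have "s \<in> Z S1 S2 (T_Y T Y) (F \<union> Y) (Suc k)"
        using R_sub_Z[of "F \<union> Y" S1 S2 "T_Y T Y" "Suc k"] by blast
      then show ?thesis .
    next
      case False
      then have eq: "T_Y T Y s a = T s a" for a by (simp add: T_Y_def)
      from s Suc.IH show ?thesis
        by (auto simp: enabled_TY eq)
    qed
  qed
qed

theorem lemma1:
  fixes S1 S2 :: "'s set" and A1 A2 :: "'a set"
    and T :: "'s \<Rightarrow> 'a \<Rightarrow> 's option" and s0 :: 's and F Y :: "'s set"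
  assumes "game S1 S2 A1 A2 T s0 F"
    and "Y \<subseteq> Win2 S1 S2 T F - F"
    and "s \<in> Win2 S1 S2 T F"
  shows "rank S1 S2 (T_Y T Y) (F \<union> Y) s \<le> rank S1 S2 T F s"
proof -
  from assms(3) obtain k where k: "s \<in> Z S1 S2 T F k" by (auto simp: Win2_def)
  define n where "n = (LEAST k. s \<in> Z S1 S2 T F k)"
  have n: "s \<in> Z S1 S2 T F n" unfolding n_def using k by (rule LeastI)
  then have n2: "s \<in> Z S1 S2 (T_Y T Y) (F \<union> Y) n" using Z_sub[of S1 S2 T F n Y] by blast
  have "(LEAST k. s \<in> Z S1 S2 (T_Y T Y) (F \<union> Y) k) \<le> n"
    using n2 by (rule Least_le)
  then show ?thesis using k n2 unfolding rank_def n_def by auto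
qed

end
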